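(* Let $\operatorname{char}(k)\ne2$, $r\ge2$, $m\ge2$, $a_1,\dots,a_{r+1},b_1,\dots,b_m\in X$, $\mu=[a_{r+1},\dots,a_1]_R$, $\nu=[b_m,\dots,b_1]_R$. For all $i,j$ with $2\le i\le r+1$ and $2\le j\le m$, $$(\mu\circ\nu)\sim(-1)^{|a_i||a_{i-1}\cdots a_1b_m\cdots b_j|+|b_j||a_{i-1}\cdots a_1b_m\cdots b_{j+1}|}\,(\mu_{a_i\mapsto b_j}\circ\nu_{b_j\mapsto a_i}),$$ where $\mu_{a_i\mapsto b_j}$ is obtained from $\mu$ by replacing the letter $a_i$ (in position $i$) by $b_j$, and $\nu_{b_j\mapsto a_i}$ is obtained from $\nu$ by replacing $b_j$ (in position $j$) by $a_i$. In particular, if $r=m$, $a_1=b_1$ and $a_1\in X_1$, then $(\mu\circ\nu)\sim-(\mu\circ\nu)$, and consequently $(\mu\circ\nu)$ equals in $\mathrm{GDN}_s(X)$ a linear combination of terms of length $\ell(\mu)+\ell(\nu)$ and root number $>r(\mu)+r(\nu)=2$.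
   Context: A GDN superalgebra is a superalgebra $\mathcal A=\mathcal A_0\oplus\mathcal A_1$ over a field $k$ (product $\circ$, $\mathcal A_i\circ\mathcal A_j\subseteq\mathcal A_{i+j}$ mod 2, $|x|=i$ for nonzero $x\in\mathcal A_i$) satisfying for homogeneous $x,y,z$: $x\circ(y\circ z)-(x\circ y)\circ z=(-1)^{|x||y|}(y\circ(x\circ z)-(y\circ x)\circ z)$ and $(x\circ y)\circ z=(-1)^{|y||z|}(x\circ z)\circ y$. $X=X_0\sqcup X_1$ is well-ordered, elements of $X_i$ have parity $i$, and $\mathrm{GDN}_s(X)$ is the free GDN superalgebra on $X$. Terms over $X$: letters of $X$ and products $(\mu\circ\nu)$ of terms, regarded as elements of $\mathrm{GDN}_s(X)$; length $\ell$ is the number of letters. $[\mu_1,\dots,\mu_n]_R=(\mu_1\circ(\cdots\circ(\mu_{n-1}\circ\mu_n)\cdots))$. Root number: $r(a)=0$ ($a\in X$), $r((\mu\circ\nu))=r(\mu)+1$ if $\nu\in X$, else $r(\mu)+r(\nu)$. For a string $a_1\cdots a_n$ of letters, $|a_1\cdots a_n|=|a_1|+\dots+|a_n|\pmod 2$, and the empty string has parity $0$. For terms $\mu,\nu$ with $r(\mu)=r(\nu)$, $\ell(\mu)=\ell(\nu)$ and nonzero $\alpha,\beta\in k$, write $\alpha\mu\sim\beta\nu$ if $\alpha\mu-\beta\nu=\sum_i\alpha_i\mu_i$ in $\mathrm{GDN}_s(X)$ for some $\alpha_i\in k$ and terms $\mu_i$ with $\ell(\mu_i)=\ell(\mu)$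 and $r(\mu_i)>r(\mu)$. *)

theory Defs
  imports Main
begin

datatype 'x tm = Let 'x | Mul "'x tm" "'x tm"

fun len :: "'x tm \<Rightarrow> nat" where
  "len (Let a) = 1"
| "len (Mul u v) = len u + len v"

fun rn :: "'x tm \<Rightarrow> nat" where
  "rn (Let a) = 0"
| "rn (Mul u (Let a)) = rn u + 1"
| "rn (Mul u (Mul v w)) = rn u + rn (Mul v w)"

text \<open>Parity of a term, given the parity map p (True = odd, i.e. in X_1).\<close>
fun tpar :: "('x \<Rightarrow> bool) \<Rightarrow> 'x tm \<Rightarrow> bool" where
  "tpar p (Let a) = p a"
| "tpar p (Mul u v) = (tpar p u \<noteq> tpar p v)"

definition spar :: "('x \<Rightarrow> bool) \<Rightarrow> 'x list \<Rightarrow> bool" where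
  "spar p xs = odd (length (filter p xs))"

definition sgn_of :: "bool \<Rightarrow> 'k::field" where
  "sgn_of e = (if e then -1 else 1)"

text \<open>Elements of the free nonassociative algebra k<X>: finitely supported
  functions from terms to k (finite support is tracked separately).\<close>
definition delta :: "'x tm \<Rightarrow> 'x tm \<Rightarrow> 'k::field" where
  "delta t = (\<lambda>s. if s = t then 1 else 0)"

definition vadd :: "('x tm \<Rightarrow> 'k::field) \<Rightarrow> ('x tm \<Rightarrow> 'k) \<Rightarrow> 'x tm \<Rightarrow> 'k" where
  "vadd f g = (\<lambda>s. f s + g s)"

definition vsmult :: "'k::field \<Rightarrow> ('x tm \<Rightarrow> 'k) \<Rightarrow> 'x tm \<Rightarrow> 'k" where
  "vsmult c f = (\<lambda>s. c * f s)"

definition vsub :: "('x tm \<Rightarrow> 'k::field) \<Rightarrow> ('x tm \<Rightarrow> 'k) \<Rightarrow> 'x tm \<Rightarrow> 'k" where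
  "vsub f g = (\<lambda>s. f s - g s)"

definition lmul :: "'x tm \<Rightarrow> ('x tm \<Rightarrow> 'k::field) \<Rightarrow> 'x tm \<Rightarrow> 'k" where
  "lmul u f = (\<lambda>s. case s of Mul u' t \<Rightarrow> (if u' = u then f t else 0) | Let _ \<Rightarrow> 0)"

definition rmul :: "('x tm \<Rightarrow> 'k::field) \<Rightarrow> 'x tm \<Rightarrow> 'x tm \<Rightarrow> 'k" where
  "rmul f u = (\<lambda>s. case s of Mul t u' \<Rightarrow> (if u' = u then f t else 0) | Let _ \<Rightarrow> 0)"

text \<open>Generators of the defining ideal of GDN_s(X): the two super-identities
  instantiated at terms (which are homogeneous and span k<X>; the identities are
  trilinear, so this generates the same ideal as all homogeneous instances).\<close>
definition assoc_el :: "'x tm \<Rightarrow> 'x tm \<Rightarrow> 'x tm \<Rightarrow> 'x tm \<Rightarrow> 'k::field" where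
  "assoc_el x y z = vsub (delta (Mul x (Mul y z))) (delta (Mul (Mul x y) z))"

definition gen1 :: "('x \<Rightarrow> bool) \<Rightarrow> 'x tm \<Rightarrow> 'x tm \<Rightarrow> 'x tm \<Rightarrow> 'x tm \<Rightarrow> 'k::field" where
  "gen1 p x y z = vsub (assoc_el x y z)
      (vsmult (sgn_of (tpar p x \<and> tpar p y)) (assoc_el y x z))"

definition gen2 :: "('x \<Rightarrow> bool) \<Rightarrow> 'x tm \<Rightarrow> 'x tm \<Rightarrow> 'x tm \<Rightarrow> 'x tm \<Rightarrow> 'k::field" where
  "gen2 p x y z = vsub (delta (Mul (Mul x y) z))
      (vsmult (sgn_of (tpar p y \<and> tpar p z)) (delta (Mul (Mul x z) y)))"

inductive gdn_ideal :: "('x \<Rightarrow> bool) \<Rightarrow> ('x tm \<Rightarrow> 'k::field) \<Rightarrow> bool" for p where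
  g1: "gdn_ideal p (gen1 p x y z)"
| g2: "gdn_ideal p (gen2 p x y z)"
| zero: "gdn_ideal p (\<lambda>_. 0)"
| add: "gdn_ideal p f \<Longrightarrow> gdn_ideal p g \<Longrightarrow> gdn_ideal p (vadd f g)"
| smult: "gdn_ideal p f \<Longrightarrow> gdn_ideal p (vsmult c f)"
| lmult: "gdn_ideal p f \<Longrightarrow> gdn_ideal p (lmul u f)"
| rmult: "gdn_ideal p f \<Longrightarrow> gdn_ideal p (rmul f u)"

definition gdn_eq :: "('x \<Rightarrow> bool) \<Rightarrow> ('x tm \<Rightarrow> 'k::field) \<Rightarrow> ('x tm \<Rightarrow> 'k) \<Rightarrow> bool" where
  "gdn_eq p f g \<longleftrightarrow> gdn_ideal p (vsub f g)"

definition lincomb_of :: "('x \<Rightarrow> bool) \<Rightarrow> ('x tm \<Rightarrow> 'k::field) \<Rightarrow> ('x tm \<Rightarrow> bool) \<Rightarrow> bool" where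
  "lincomb_of p f P \<longleftrightarrow> (\<exists>c :: 'x tm \<Rightarrow> 'k. finite {t. c t \<noteq> 0} \<and>
       (\<forall>t. c t \<noteq> 0 \<longrightarrow> P t) \<and> gdn_eq p f c)"

definition sim :: "('x \<Rightarrow> bool) \<Rightarrow> 'k::field \<Rightarrow> 'x tm \<Rightarrow> 'k \<Rightarrow> 'x tm \<Rightarrow> bool" where
  "sim p \<alpha> \<mu> \<beta> \<nu> \<longleftrightarrow> rn \<mu> = rn \<nu> \<and> len \<mu> = len \<nu> \<and> \<alpha> \<noteq> 0 \<and> \<beta> \<noteq> 0 \<and>
     lincomb_of p (vsub (vsmult \<alpha> (delta \<mu>)) (vsmult \<beta> (delta \<nu>)))
        (\<lambda>t. len t = len \<mu> \<and> rn t > rn \<mu>)"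

text \<open>Right-normed term [a_n, a_(n-1), ..., a_1]_R built from a : nat => 'x.\<close>
fun rnormed :: "(nat \<Rightarrow> 'x) \<Rightarrow> nat \<Rightarrow> 'x tm" where
  "rnormed a n = (if n \<le> 1 then Let (a 1) else Mul (Let (a n)) (rnormed a (n - 1)))"

end

theory Submission
  imports Defs
begin


lemma lc_add:
  assumes "lincomb_of p f P" "lincomb_of p g P"
  shows "lincomb_of p (vadd f g) P"
proof -
  obtain c1 where c1: "finite {t. c1 t \<noteq> 0}" "\<forall>t. c1 t \<noteq> 0 \<longrightarrow> P t" "gdn_eq p f c1"
    using assms(1) unfolding lincomb_of_def by blast
  obtain c2 where c2: "finite {t. c2 t \<noteq> 0}" "\<forall>t. c2 t \<noteq> 0 \<longrightarrow> P t" "gdn_eq p g c2"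
    using assms(2) unfolding lincomb_of_def by blast
  let ?c = "\<lambda>t. c1 t + c2 t"
  have "{t. ?c t \<noteq> 0} \<subseteq> {t. c1 t \<noteq> 0} \<union> {t. c2 t \<noteq> 0}" by auto
  hence "finite {t. ?c t \<noteq> 0}" using c1(1) c2(1) finite_subset by blast
  moreover have "\<forall>t. ?c t \<noteq> 0 \<longrightarrow> P t" using c1(2) c2(2) by (metis add.right_neutral)
  moreover have "vsub (vadd f g) ?c = vadd (vsub f c1) (vsub g c2)"
    by (auto simp: vsub_def vadd_def algebra_simps)
  hence "gdn_eq p (vadd f g) ?c" using c1(3) c2(3) gdn_ideal.add unfolding gdn_eq_def by metis
  ultimately show ?thesis unfolding lincomb_of_def by (intro exI[of _ ?c]) blast
qed

lemma lc_smult: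
  assumes "lincomb_of p f P"
  shows "lincomb_of p (vsmult a f) P"
proof -
  obtain c1 where c1: "finite {t. c1 t \<noteq> 0}" "\<forall>t. c1 t \<noteq> 0 \<longrightarrow> P t" "gdn_eq p f c1"
    using assms(1) unfolding lincomb_of_def by blast
  let ?c = "\<lambda>t. a * c1 t"
  have "{t. ?c t \<noteq> 0} \<subseteq> {t. c1 t \<noteq> 0}" by auto
  hence "finite {t. ?c t \<noteq> 0}" using c1(1) finite_subset by blast
  moreover have "\<forall>t. ?c t \<noteq> 0 \<longrightarrow> P t" using c1(2) by fastforce
  moreover have "vsub (vsmult a f) ?c = vsmult a (vsub f c1)"
    by (auto simp: vsub_def vsmult_def algebra_simps)
  hence "gdn_eq p (vsmult a f) ?c" using c1(3) gdn_ideal.smult unfolding gdn_eq_def by metis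
  ultimately show ?thesis unfolding lincomb_of_def by (intro exI[of _ ?c]) blast
qed

lemma lc_sub:
  assumes "lincomb_of p f P" "lincomb_of p g P"
  shows "lincomb_of p (vsub f g) P"
proof -
  have "vsub f g = vadd f (vsmult (-1) g)" by (auto simp: vsub_def vadd_def vsmult_def)
  thus ?thesis using lc_add lc_smult assms by metis
qed

lemma lc_ideal:
  assumes "gdn_ideal p f"
  shows "lincomb_of p f P"
proof -
  have "vsub f (\<lambda>_. 0) = f" by (auto simp: vsub_def)
  thus ?thesis using assms unfolding lincomb_of_def gdn_eq_def by (intro exI[of _ "\<lambda>_. 0"]) auto
qed

lemma lc_delta:
  assumes "P t"
  shows "lincomb_of p (delta t :: _ \<Rightarrow> 'k::field) P"
proof -
  have "vsub (delta t) (delta t) = (\<lambda>_. 0::'k)" by (auto simp: vsub_def)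
  moreover have "{s. delta t s \<noteq> (0::'k)} = {t}" by (auto simp: delta_def)
  ultimately show ?thesis using assms unfolding lincomb_of_def gdn_eq_def
    by (intro exI[of _ "delta t"]) (auto intro: gdn_ideal.zero simp: delta_def)
qed

lemma lc_mono:
  assumes "lincomb_of p f P" "\<And>t. P t \<Longrightarrow> Q t"
  shows "lincomb_of p f Q"
  using assms unfolding lincomb_of_def by blast

lemma lc_lmul:
  assumes "lincomb_of p f P" "\<And>t. P t \<Longrightarrow> Q (Mul u t)"
  shows "lincomb_of p (lmul u f) Q"
proof -
  obtain c1 where c1: "finite {t. c1 t \<noteq> 0}" "\<forall>t. c1 t \<noteq> 0 \<longrightarrow> P t" "gdn_eq p f c1"
    using assms(1) unfolding lincomb_of_def by blast
  let ?c = "lmul u c1"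
  have "{t. ?c t \<noteq> 0} \<subseteq> Mul u ` {t. c1 t \<noteq> 0}"
  proof
    fix s assume "s \<in> {t. ?c t \<noteq> 0}"
    then show "s \<in> Mul u ` {t. c1 t \<noteq> 0}"
      by (cases s) (auto simp: lmul_def split: if_splits)
  qed
  hence "finite {t. ?c t \<noteq> 0}" using c1(1) finite_subset by blast
  moreover have "\<forall>t. ?c t \<noteq> 0 \<longrightarrow> Q t" using c1(2) assms(2)
    by (auto simp: lmul_def split: tm.splits if_splits)
  moreover have "vsub (lmul u f) ?c = lmul u (vsub f c1)"
    by (auto simp: vsub_def lmul_def split: tm.splits)
  hence "gdn_eq p (lmul u f) ?c" using c1(3) gdn_ideal.lmult unfolding gdn_eq_def by metis
  ultimately show ?thesis unfolding lincomb_of_def by (intro exI[of _ ?c]) blast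
qed

lemma lc_rmul:
  assumes "lincomb_of p f P" "\<And>t. P t \<Longrightarrow> Q (Mul t u)"
  shows "lincomb_of p (rmul f u) Q"
proof -
  obtain c1 where c1: "finite {t. c1 t \<noteq> 0}" "\<forall>t. c1 t \<noteq> 0 \<longrightarrow> P t" "gdn_eq p f c1"
    using assms(1) unfolding lincomb_of_def by blast
  let ?c = "rmul c1 u"
  have "{t. ?c t \<noteq> 0} \<subseteq> (\<lambda>t. Mul t u) ` {t. c1 t \<noteq> 0}"
  proof
    fix s assume "s \<in> {t. ?c t \<noteq> 0}"
    then show "s \<in> (\<lambda>t. Mul t u) ` {t. c1 t \<noteq> 0}"
      by (cases s) (auto simp: rmul_def split: if_splits)
  qed
  hence "finite {t. ?c t \<noteq> 0}" using c1(1) finite_subset by blast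
  moreover have "\<forall>t. ?c t \<noteq> 0 \<longrightarrow> Q t" using c1(2) assms(2)
    by (auto simp: rmul_def split: tm.splits if_splits)
  moreover have "vsub (rmul f u) ?c = rmul (vsub f c1) u"
    by (auto simp: vsub_def rmul_def split: tm.splits)
  hence "gdn_eq p (rmul f u) ?c" using c1(3) gdn_ideal.rmult unfolding gdn_eq_def by metis
  ultimately show ?thesis unfolding lincomb_of_def by (intro exI[of _ ?c]) blast
qed

lemma lmul_lin: "lmul u (vsub (delta s) (vsmult a (delta t))) = vsub (delta (Mul u s)) (vsmult a (delta (Mul u t)))"
  by (auto simp: lmul_def vsub_def vsmult_def delta_def split: tm.splits)

lemma rmul_lin: "rmul (vsub (delta s) (vsmult a (delta t))) u = vsub (delta (Mul s u)) (vsmult a (delta (Mul t u)))"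
  by (auto simp: rmul_def vsub_def vsmult_def delta_def split: tm.splits)



lemma sgn_of_mult: "sgn_of e1 * sgn_of e2 = (sgn_of (e1 \<noteq> e2) :: 'k::field)"
  by (auto simp: sgn_of_def)

lemma sgn_of_nz: "sgn_of e \<noteq> (0::'k::field)"
  by (auto simp: sgn_of_def)

lemma sim1: "sim p (1::'k::field) s (sgn_of e) t \<longleftrightarrow> rn s = rn t \<and> len s = len t \<and>
   lincomb_of p (vsub (delta s) (vsmult (sgn_of e) (delta t)) :: _ \<Rightarrow> 'k) (\<lambda>x. len x = len s \<and> rn x > rn s)"
proof -
  have "vsmult (1::'k) (delta s) = delta s" by (auto simp: vsmult_def)
  thus ?thesis unfolding sim_def using sgn_of_nz by auto
qed

lemma sim_refl: "sim p (1::'k::field) s (sgn_of False) s"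
proof -
  have "vsub (delta s) (vsmult (sgn_of False) (delta s)) = (\<lambda>_. 0::'k)"
    by (auto simp: vsub_def vsmult_def sgn_of_def)
  thus ?thesis unfolding sim1 using lc_ideal gdn_ideal.zero by metis
qed

lemma sim_trans:
  assumes "sim p (1::'k::field) s (sgn_of e1) t" "sim p (1::'k) t (sgn_of e2) w"
  shows "sim p (1::'k) s (sgn_of (e1 \<noteq> e2)) w"
proof -
  have "vsub (delta s) (vsmult (sgn_of (e1 \<noteq> e2)) (delta w)) =
     vadd (vsub (delta s) (vsmult (sgn_of e1) (delta t))) (vsmult (sgn_of e1) (vsub (delta t) (vsmult (sgn_of e2) (delta w))) :: _ \<Rightarrow> 'k)"
    by (auto simp: vsub_def vadd_def vsmult_def sgn_of_def algebra_simps)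
  thus ?thesis using assms unfolding sim1 by (auto intro!: lc_add lc_smult)
qed

lemma sim_sym:
  assumes "sim p (1::'k::field) s (sgn_of e) t"
  shows "sim p (1::'k) t (sgn_of e) s"
proof -
  have "vsub (delta t) (vsmult (sgn_of e) (delta s)) =
     vsmult (- sgn_of e) (vsub (delta s) (vsmult (sgn_of e) (delta t)) :: _ \<Rightarrow> 'k)"
    by (auto simp: vsub_def vadd_def vsmult_def sgn_of_def algebra_simps)
  thus ?thesis using assms unfolding sim1 by (auto intro!: lc_smult)
qed

definition rnc :: "'x tm \<Rightarrow> nat" where "rnc v = (case v of Let _ \<Rightarrow> 1 | Mul _ _ \<Rightarrow> rn v)"

lemma rn_Mul: "rn (Mul u v) = rn u + rnc v"
  by (cases v) (auto simp: rnc_def)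

lemma rnc_nl: "\<not> (\<exists>a. v = Let a) \<Longrightarrow> rnc v = rn v"
  by (cases v) (auto simp: rnc_def)

lemma rn_pos_nl: "rn x > n \<Longrightarrow> \<not> (\<exists>a. x = Let a)"
  by auto

lemma rnc_gt: "rn x > n \<Longrightarrow> rnc x = rn x"
  by (cases x) (auto simp: rnc_def)

lemma sim_lctx:
  assumes "sim p (1::'k::field) s (sgn_of e) t" "\<not> (\<exists>a. s = Let a)" "\<not> (\<exists>a. t = Let a)"
  shows "sim p (1::'k) (Mul u s) (sgn_of e) (Mul u t)"
  using assms unfolding sim1
  by (auto simp: rn_Mul rnc_nl rnc_gt lmul_lin[symmetric] intro!: lc_lmul)

lemma sim_rctx:
  assumes "sim p (1::'k::field) s (sgn_of e) t" "\<not> (\<exists>a. s = Let a)" "\<not> (\<exists>a. t = Let a)"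
  shows "sim p (1::'k) (Mul s u) (sgn_of e) (Mul t u)"
  using assms unfolding sim1
  by (auto simp: rn_Mul rnc_nl rmul_lin[symmetric] intro!: lc_rmul)

lemma sim_RC: "sim p (1::'k::field) (Mul (Mul x y) z) (sgn_of (tpar p y \<and> tpar p z)) (Mul (Mul x z) y)"
proof -
  have "gdn_ideal p (gen2 p x y z :: _ \<Rightarrow> 'k)" by (rule gdn_ideal.g2)
  thus ?thesis unfolding sim1 gen2_def by (auto simp: rn_Mul intro: lc_ideal)
qed

lemma sim_LS: "sim p (1::'k::field) (Mul (Let x) (Mul (Let y) z)) (sgn_of (p x \<and> p y)) (Mul (Let y) (Mul (Let x) z))"
proof -
  let ?e = "sgn_of (p x \<and> p y) :: 'k"
  have EQ: "vsub (delta (Mul (Let x) (Mul (Let y) z))) (vsmult ?e (delta (Mul (Let y) (Mul (Let x) z))))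
    = vadd (gen1 p (Let x) (Let y) z) (vsub (delta (Mul (Mul (Let x) (Let y)) z)) (vsmult ?e (delta (Mul (Mul (Let y) (Let x)) z))))"
    by (auto simp: gen1_def assoc_el_def vsub_def vadd_def vsmult_def algebra_simps)
  have G: "gdn_ideal p (gen1 p (Let x) (Let y) z :: _ \<Rightarrow> 'k)" by (rule gdn_ideal.g1)
  have M: "lincomb_of p (vsub (delta (Mul (Mul (Let x) (Let y)) z)) (vsmult ?e (delta (Mul (Mul (Let y) (Let x)) z))))
     (\<lambda>t. len t = len (Mul (Let x) (Mul (Let y) z)) \<and> rn t > rn (Mul (Let x) (Mul (Let y) z)))"
    by (intro lc_sub lc_smult lc_delta) (auto simp: rn_Mul rnc_def)
  have "lincomb_of p (vsub (delta (Mul (Let x) (Mul (Let y) z))) (vsmult ?e (delta (Mul (Let y) (Mul (Let x) z)))))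
     (\<lambda>t. len t = len (Mul (Let x) (Mul (Let y) z)) \<and> rn t > rn (Mul (Let x) (Mul (Let y) z)))"
    unfolding EQ by (rule lc_add[OF lc_ideal[OF G] M])
  thus ?thesis unfolding sim1 by (simp add: rn_Mul rnc_def)
qed



fun rl :: "'x list \<Rightarrow> 'x \<Rightarrow> 'x tm" where
  "rl [] z = Let z"
| "rl (x # xs) z = Mul (Let x) (rl xs z)"

lemma spar_Nil[simp]: "spar p [] = False" by (simp add: spar_def)
lemma spar_Cons[simp]: "spar p (x # xs) = (p x \<noteq> spar p xs)" by (simp add: spar_def)
lemma spar_append[simp]: "spar p (xs @ ys) = (spar p xs \<noteq> spar p ys)" by (simp add: spar_def)

lemma tpar_rl[simp]: "tpar p (rl xs z) = (spar p xs \<noteq> p z)"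
  by (induction xs) auto

lemma rl_nl: "xs \<noteq> [] \<Longrightarrow> \<not> (\<exists>a. rl xs z = Let a)"
  by (cases xs) auto

lemma sim_cong_sign: "sim p (1::'k::field) s (sgn_of e) t \<Longrightarrow> e = e' \<Longrightarrow> sim p (1::'k) s (sgn_of e') t"
  by simp

lemma sim_move: "sim p (1::'k::field) (rl (u @ x # v) z) (sgn_of (p x \<and> spar p u)) (rl (x # u @ v) z)"
proof (induction u)
  case Nil
  then show ?case using sim_refl by simp
next
  case (Cons c u)
  have 1: "sim p (1::'k) (rl ((c # u) @ x # v) z) (sgn_of (p x \<and> spar p u)) (Mul (Let c) (rl (x # u @ v) z))"
    using sim_lctx[OF Cons.IH, where u = "Let c"] by (simp add: rl_nl)
  have 2: "sim p (1::'k) (Mul (Let c) (rl (x # u @ v) z)) (sgn_of (p c \<and> p x)) (rl (x # (c # u) @ v) z)"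
    using sim_LS[of p c x "rl (u @ v) z"] by simp
  have "((p x \<and> spar p u) \<noteq> (p c \<and> p x)) = (p x \<and> spar p (c # u))" by auto
  show ?case by (rule sim_cong_sign[OF sim_trans[OF 1 2]]) auto
qed

lemma sim_front:
  assumes "xs \<noteq> []"
  shows "sim p (1::'k::field) (Mul (rl (x # xs) z) (rl (y # ys) w))
     (sgn_of ((((spar p xs \<noteq> p z) \<and> ((p y \<noteq> spar p ys) \<noteq> p w)) \<noteq> (p x \<and> p y)) \<noteq> (((p x \<noteq> spar p ys) \<noteq> p w) \<and> (spar p xs \<noteq> p z))))
     (Mul (rl (y # xs) z) (rl (x # ys) w))"
proof -
  have 1: "sim p (1::'k) (Mul (Mul (Let x) (rl xs z)) (Mul (Let y) (rl ys w))) (sgn_of ((spar p xs \<noteq> p z) \<and> ((p y \<noteq> spar p ys) \<noteq> p w)))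
     (Mul (Mul (Let x) (Mul (Let y) (rl ys w))) (rl xs z))"
    by (rule sim_cong_sign[OF sim_RC]) auto
  have 2: "sim p (1::'k) (Mul (Mul (Let x) (Mul (Let y) (rl ys w))) (rl xs z)) (sgn_of (p x \<and> p y))
     (Mul (Mul (Let y) (Mul (Let x) (rl ys w))) (rl xs z))"
    using sim_rctx[OF sim_LS[of p x y "rl ys w"], of "rl xs z"] by simp
  have 3: "sim p (1::'k) (Mul (Mul (Let y) (Mul (Let x) (rl ys w))) (rl xs z)) (sgn_of (((p x \<noteq> spar p ys) \<noteq> p w) \<and> (spar p xs \<noteq> p z)))
     (Mul (Mul (Let y) (rl xs z)) (Mul (Let x) (rl ys w)))"
    by (rule sim_cong_sign[OF sim_RC]) auto
  note S = sim_trans[OF sim_trans[OF 1 2] 3]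
  show ?thesis apply (simp only: rl.simps) by (rule sim_cong_sign[OF S]) auto
qed

lemma sim_swap:
  assumes "ua @ va \<noteq> []"
  shows "sim p (1::'k::field) (Mul (rl (ua @ x # va) za) (rl (ub @ y # vb) zb))
     (sgn_of ((p x \<and> (((spar p va \<noteq> p za) \<noteq> spar p ub) \<noteq> p y)) \<noteq> (p y \<and> ((spar p va \<noteq> p za) \<noteq> spar p ub))))
     (Mul (rl (ua @ y # va) za) (rl (ub @ x # vb) zb))"
proof -
  have 1: "sim p (1::'k) (Mul (rl (ua @ x # va) za) (rl (ub @ y # vb) zb)) (sgn_of (p x \<and> spar p ua))
      (Mul (rl (x # ua @ va) za) (rl (ub @ y # vb) zb))"
    by (rule sim_rctx[OF sim_move]) (auto simp: rl_nl)
  have 2: "sim p (1::'k) (Mul (rl (x # ua @ va) za) (rl (ub @ y # vb) zb)) (sgn_of (p y \<and> spar p ub))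
      (Mul (rl (x # ua @ va) za) (rl (y # ub @ vb) zb))"
    by (rule sim_lctx[OF sim_move]) (auto simp: rl_nl)
  note 3 = sim_front[OF assms, of p x za y "ub @ vb" zb]
  have 4: "sim p (1::'k) (Mul (rl (y # ua @ va) za) (rl (x # ub @ vb) zb)) (sgn_of (p y \<and> spar p ua))
      (Mul (rl (ua @ y # va) za) (rl (x # ub @ vb) zb))"
    by (rule sim_rctx[OF sim_sym[OF sim_move]]) (auto simp: rl_nl)
  have 5: "sim p (1::'k) (Mul (rl (ua @ y # va) za) (rl (x # ub @ vb) zb)) (sgn_of (p x \<and> spar p ub))
      (Mul (rl (ua @ y # va) za) (rl (ub @ x # vb) zb))"
    by (rule sim_lctx[OF sim_sym[OF sim_move]]) (auto simp: rl_nl)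
  have S: "sim p (1::'k) (Mul (rl (ua @ x # va) za) (rl (ub @ y # vb) zb)) (sgn_of 
     (((((p x \<and> spar p ua) \<noteq> (p y \<and> spar p ub)) \<noteq> 
       ((((spar p (ua @ va) \<noteq> p za) \<and> ((p y \<noteq> spar p (ub @ vb)) \<noteq> p zb)) \<noteq> (p x \<and> p y)) \<noteq> (((p x \<noteq> spar p (ub @ vb)) \<noteq> p zb) \<and> (spar p (ua @ va) \<noteq> p za))))
       \<noteq> (p y \<and> spar p ua)) \<noteq> (p x \<and> spar p ub)))
     (Mul (rl (ua @ y # va) za) (rl (ub @ x # vb) zb))"
    by (rule sim_trans[OF sim_trans[OF sim_trans[OF sim_trans[OF 1 2] 3] 4] 5])
  have E: "(((((p x \<and> spar p ua) \<noteq> (p y \<and> spar p ub)) \<noteq> 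
       ((((spar p (ua @ va) \<noteq> p za) \<and> ((p y \<noteq> spar p (ub @ vb)) \<noteq> p zb)) \<noteq> (p x \<and> p y)) \<noteq> (((p x \<noteq> spar p (ub @ vb)) \<noteq> p zb) \<and> (spar p (ua @ va) \<noteq> p za))))
       \<noteq> (p y \<and> spar p ua)) \<noteq> (p x \<and> spar p ub)) =
     ((p x \<and> (((spar p va \<noteq> p za) \<noteq> spar p ub) \<noteq> p y)) \<noteq> (p y \<and> ((spar p va \<noteq> p za) \<noteq> spar p ub)))"
    by simp argo
  show ?thesis using S unfolding E .
qed

lemma sim_exch:
  assumes "length L = length R"
  shows "sim p (1::'k::field) (Mul (rl (c # P @ L) z) (rl (Q @ R) w))
     (sgn_of ((spar p L \<and> spar p R) \<noteq> ((spar p L \<noteq> spar p R) \<and> (p z \<noteq> spar p Q))))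
     (Mul (rl (c # P @ R) z) (rl (Q @ L) w))"
  using assms
proof (induction L R arbitrary: P Q rule: list_induct2)
  case Nil
  then show ?case using sim_refl by simp
next
  case (Cons y L x R)
  have 1: "sim p (1::'k) (Mul (rl (c # P @ y # L) z) (rl (Q @ x # R) w))
     (sgn_of ((p y \<and> (((spar p L \<noteq> p z) \<noteq> spar p Q) \<noteq> p x)) \<noteq> (p x \<and> ((spar p L \<noteq> p z) \<noteq> spar p Q))))
     (Mul (rl (c # P @ x # L) z) (rl (Q @ y # R) w))"
    using sim_swap[of "c # P" L p y z Q x R w] by simp
  note 2 = Cons.IH[of "P @ [x]" "Q @ [y]", unfolded append_assoc append_Cons append_Nil]
  show ?case by (rule sim_cong_sign[OF sim_trans[OF 1 2]]) auto
qed



declare rnormed.simps[simp del]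

lemma rnormed_rl: "n \<ge> 1 \<Longrightarrow> rnormed a n = rl (map a (rev [2..<n+1])) (a 1)"
proof (induction n)
  case 0 then show ?case by simp
next
  case (Suc k)
  show ?case
  proof (cases "k = 0")
    case True then show ?thesis by (simp add: rnormed.simps)
  next
    case False
    hence "[2..<Suc k + 1] = [2..<k+1] @ [Suc k]" by simp
    thus ?thesis using Suc False by (subst rnormed.simps) simp
  qed
qed

lemma rev_split: "2 \<le> i \<Longrightarrow> i \<le> n \<Longrightarrow> rev [2..<n+1] = rev [i+1..<n+1] @ i # rev [2..<i]"
proof -
  assume a: "2 \<le> i" "i \<le> n"
  have "[2..<n+1] = [2..<i] @ [i..<n+1]" using a upt_add_eq_append[of 2 i "n+1-i"] by simp
  moreover have "[i..<n+1] = i # [i+1..<n+1]" using a upt_conv_Cons by simp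
  ultimately show ?thesis by simp
qed

lemma map_upd_out: "i \<notin> set xs \<Longrightarrow> map (a(i := v)) xs = map a xs"
  by (induction xs) auto

theorem lemma2p9:
  fixes p :: "'x \<Rightarrow> bool" and a b :: "nat \<Rightarrow> 'x" and r m :: nat
  assumes char: "(2::'k::field) \<noteq> 0"
    and r2: "2 \<le> r" and m2: "2 \<le> m"
  shows "(\<forall>i j. 2 \<le> i \<and> i \<le> r + 1 \<and> 2 \<le> j \<and> j \<le> m \<longrightarrow>
            sim p (1::'k) (Mul (rnormed a (r + 1)) (rnormed b m))
              (sgn_of ((p (a i) \<and> spar p (map a (rev [1..<i]) @ map b (rev [j..<m + 1])))
                      \<noteq> (p (b j) \<and> spar p (map a (rev [1..<i]) @ map b (rev [j + 1..<m + 1])))))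
              (Mul (rnormed (a(i := b j)) (r + 1)) (rnormed (b(j := a i)) m)))
       \<and> (r = m \<and> a 1 = b 1 \<and> p (a 1) \<longrightarrow>
            sim p (1::'k) (Mul (rnormed a (r + 1)) (rnormed b m))
                  (-1) (Mul (rnormed a (r + 1)) (rnormed b m))
          \<and> lincomb_of p (delta (Mul (rnormed a (r + 1)) (rnormed b m)) :: 'x tm \<Rightarrow> 'k)
              (\<lambda>t. len t = len (rnormed a (r + 1)) + len (rnormed b m)
                   \<and> rn t > rn (rnormed a (r + 1)) + rn (rnormed b m)))"
proof (intro conjI allI impI)
  fix i j assume ij: "2 \<le> i \<and> i \<le> r + 1 \<and> 2 \<le> j \<and> j \<le> m"
  define ua where "ua = map a (rev [i+1..<r+1+1])"
  define va where "va = map a (rev [2..<i])"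
  define ub where "ub = map b (rev [j+1..<m+1])"
  define vb where "vb = map b (rev [2..<j])"
  have e1: "\<And>f. rnormed f (r+1) = rl (map f (rev [2..<r+1+1])) (f 1)"
    by (rule rnormed_rl) simp
  have e2: "rev [2..<r+1+1] = rev [i+1..<r+1+1] @ i # rev [2..<i]"
    by (rule rev_split) (use ij in auto)
  have e3: "\<And>f. rnormed f m = rl (map f (rev [2..<m+1])) (f 1)"
    by (rule rnormed_rl) (use m2 in simp)
  have e4: "rev [2..<m+1] = rev [j+1..<m+1] @ j # rev [2..<j]"
    by (rule rev_split) (use ij in auto)
  have u1: "map (a(i:=b j)) (rev [i+1..<r+1+1]) = ua"
    unfolding ua_def by (rule map_upd_out) simp
  have u2: "map (a(i:=b j)) (rev [2..<i]) = va"
    unfolding va_def by (rule map_upd_out) simp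
  have u3: "map (b(j:=a i)) (rev [j+1..<m+1]) = ub"
    unfolding ub_def by (rule map_upd_out) simp
  have u4: "map (b(j:=a i)) (rev [2..<j]) = vb"
    unfolding vb_def by (rule map_upd_out) simp
  have o1: "(a(i:=b j)) 1 = a 1" "(b(j:=a i)) 1 = b 1" using ij by auto
  have mu: "rnormed a (r+1) = rl (ua @ a i # va) (a 1)"
    unfolding e1 e2 map_append list.map ua_def va_def by (rule refl)
  have nu: "rnormed b m = rl (ub @ b j # vb) (b 1)"
    unfolding e3 e4 map_append list.map ub_def vb_def by (rule refl)
  have mu': "rnormed (a(i := b j)) (r+1) = rl (ua @ b j # va) (a 1)"
    unfolding e1 e2 map_append list.map u1 u2 o1 by simp
  have nu': "rnormed (b(j := a i)) m = rl (ub @ a i # vb) (b 1)"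
    unfolding e3 e4 map_append list.map u3 u4 o1 by simp
  have ne: "ua @ va \<noteq> []" using ij r2 by (simp add: ua_def va_def)
  have i2: "2 \<le> i" using ij by simp
  have h1: "[1..<i] = 1 # [2..<i]" using i2 by (metis Suc_1 Suc_le_lessD upt_conv_Cons)
  have s1: "map a (rev [1..<i]) = va @ [a 1]" unfolding h1 va_def by (simp only: rev.simps map_append list.map)
  have s2: "map b (rev [j..<m+1]) = ub @ [b j]" using ij upt_conv_Cons[of j "m+1"] by (simp add: ub_def)
  show "sim p (1::'k) (Mul (rnormed a (r + 1)) (rnormed b m))
              (sgn_of ((p (a i) \<and> spar p (map a (rev [1..<i]) @ map b (rev [j..<m + 1])))
                      \<noteq> (p (b j) \<and> spar p (map a (rev [1..<i]) @ map b (rev [j + 1..<m + 1])))))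
              (Mul (rnormed (a(i := b j)) (r + 1)) (rnormed (b(j := a i)) m))"
    unfolding mu nu mu' nu' s1 s2 ub_def[symmetric]
    by (rule sim_cong_sign[OF sim_swap[OF ne]]) auto
next
  assume h: "r = m \<and> a 1 = b 1 \<and> p (a 1)"
  define L1 where "L1 = map a (rev [2..<r+1])"
  define L2 where "L2 = map b (rev [2..<r+1])"
  define z where "z = a 1"
  have mu: "rnormed a (r+1) = rl (a (r+1) # L1) z"
  proof -
    have "rnormed a (r+1) = Mul (Let (a (r+1))) (rnormed a r)" using r2 by (subst rnormed.simps) simp
    also have "rnormed a r = rl L1 z" using r2 by (simp add: rnormed_rl L1_def z_def)
    finally show ?thesis by simp
  qed
  have nu: "rnormed b m = rl L2 z"
    using r2 h by (simp add: rnormed_rl L2_def z_def)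
  have len: "length L2 = length L1" by (simp add: L1_def L2_def)
  have L2ne: "L2 \<noteq> []" using r2 by (simp add: L2_def)
  have pz: "p z" using h unfolding z_def by blast
  let ?T = "Mul (rl (a (r+1) # L1) z) (rl L2 z)"
  have 1: "sim p (1::'k) (Mul (Mul (Let (a (r+1))) (rl L1 z)) (rl L2 z)) (sgn_of (tpar p (rl L1 z) \<and> tpar p (rl L2 z)))
      (Mul (Mul (Let (a (r+1))) (rl L2 z)) (rl L1 z))" by (rule sim_RC)
  note 2 = sim_exch[OF len, of p "a (r+1)" "[]" z "[]" z, unfolded append_Nil rl.simps]
  have S: "sim p (1::'k) ?T (sgn_of True) ?T"
    apply (simp only: rl.simps(2))
    by (rule sim_cong_sign[OF sim_trans[OF 1 2]]) (use pz in auto)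
  hence S': "sim p (1::'k) ?T (-1) ?T" by (simp add: sgn_of_def)
  thus "sim p (1::'k) (Mul (rnormed a (r + 1)) (rnormed b m)) (-1) (Mul (rnormed a (r + 1)) (rnormed b m))"
    unfolding mu nu .
  have LC: "lincomb_of p (vsub (delta ?T) (vsmult (sgn_of True) (delta ?T)) :: _ \<Rightarrow> 'k)
      (\<lambda>x. len x = len ?T \<and> rn x > rn ?T)" using S unfolding sim1 by simp
  have "vsmult (1/2) (vsub (delta ?T) (vsmult (sgn_of True) (delta ?T))) = (delta ?T :: _ \<Rightarrow> 'k)"
    using char by (auto simp: vsmult_def vsub_def sgn_of_def delta_def)
  hence LC2: "lincomb_of p (delta ?T :: _ \<Rightarrow> 'k) (\<lambda>x. len x = len ?T \<and> rn x > rn ?T)"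
    using lc_smult[OF LC, of "1/2"] by simp
  have "rn ?T = rn (rl (a (r+1) # L1) z) + rn (rl L2 z)"
    using rl_nl[OF L2ne] by (simp add: rn_Mul rnc_nl)
  thus "lincomb_of p (delta (Mul (rnormed a (r + 1)) (rnormed b m)) :: 'x tm \<Rightarrow> 'k)
              (\<lambda>t. len t = len (rnormed a (r + 1)) + len (rnormed b m)
                   \<and> rn t > rn (rnormed a (r + 1)) + rn (rnormed b m))"
    unfolding mu nu using LC2 by simp
qed

end
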